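(* Let $(G,\precsim)$ be a compatible quasi-ordered abelian group and define the ternary relation $C$ on $G$ by: $C(x,y,z)$ holds iff $(x\neq y=z)\vee\big(x-z\in G^v\wedge y-z\precnsim x-z\big)\vee\big(y-z\in G^o\wedge x-z\in G^o\wedge 0\precnsim x-y\wedge 0\precnsim x-z\big)$. Then $C$ is a C-relation on $G$ compatible with $+$. Moreover, $\precsim$ is the only compatible quasi-order on $G$ inducing $C$ (via this formula), $C$ is definable by a quantifier-free formula in the language $\{0,+,-,\precsim\}$, and $\precsim$ is definable by a quantifier-free formula in the language $\{0,+,-,C\}$.
   Context: A compatible quasi-ordered abelian group is an abelian group $G$ with a total quasi-order $\precsim$ (reflexive, transitive, any two elements comparable) such that, writing $a\sim b$ for $a\precsim b\wedge b\precsim a$: $(Q_1)$ $x\sim0\Rightarrow x=0$; $(Q_2)$ $x\precsim y\wedge y\not\sim z\Rightarrow x+z\precsim y+z$. $a\precnsim b$ means $a\precsim b\wedge a\not\sim b$. With $cl(g)$ the $\sim$-class of $g$, $g$ is o-type if $cl(g)=\{g\}$ and $g$ is not of order $2$; $G^o$ is the set of o-type elements and $G^v=G\setminus G^o$. A C-relation on a set $M$ is a ternary relation $C$ satisfying: $(C_1)$ $C(x,y,z)\Rightarrow C(x,z,y)$; $(C_2)$ $C(x,y,z)\Rightarrow\neg C(y,x,z)$; $(C_3)$ $C(x,y,z)\Rightarrow C(w,y,z)\vee C(x,w,z)$; $(C_4)$ $x\neq y\Rightarrow C(x,y,y)$. It is compatible with $+$ if $C(x,y,z)\Rightarrow C(v+x+u,v+y+u,v+z+u)$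 for all $x,y,z,u,v$. *)

theory Defs
  imports Main
begin

definition qsim :: "('a \<Rightarrow> 'a \<Rightarrow> bool) \<Rightarrow> 'a \<Rightarrow> 'a \<Rightarrow> bool" where
  "qsim le a b \<longleftrightarrow> le a b \<and> le b a"

definition qstrict :: "('a \<Rightarrow> 'a \<Rightarrow> bool) \<Rightarrow> 'a \<Rightarrow> 'a \<Rightarrow> bool" where
  "qstrict le a b \<longleftrightarrow> le a b \<and> \<not> qsim le a b"

definition compatible_qo :: "('a::ab_group_add \<Rightarrow> 'a \<Rightarrow> bool) \<Rightarrow> bool" where
  "compatible_qo le \<longleftrightarrow>
     (\<forall>x. le x x) \<and>
     (\<forall>x y z. le x y \<and> le y z \<longrightarrow> le x z) \<and>
     (\<forall>x y. le x y \<or> le y x) \<and>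
     (\<forall>x. qsim le x 0 \<longrightarrow> x = 0) \<and>
     (\<forall>x y z. le x y \<and> \<not> qsim le y z \<longrightarrow> le (x + z) (y + z))"

definition order_two :: "'a::ab_group_add \<Rightarrow> bool" where
  "order_two g \<longleftrightarrow> g \<noteq> 0 \<and> g + g = 0"

definition otype :: "('a::ab_group_add \<Rightarrow> 'a \<Rightarrow> bool) \<Rightarrow> 'a \<Rightarrow> bool" where
  "otype le g \<longleftrightarrow> {h. qsim le h g} = {g} \<and> \<not> order_two g"

definition vtype :: "('a::ab_group_add \<Rightarrow> 'a \<Rightarrow> bool) \<Rightarrow> 'a \<Rightarrow> bool" where
  "vtype le g \<longleftrightarrow> \<not> otype le g"

definition induced_C :: "('a::ab_group_add \<Rightarrow> 'a \<Rightarrow> bool) \<Rightarrow> 'a \<Rightarrow> 'a \<Rightarrow> 'a \<Rightarrow> bool" where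
  "induced_C le x y z \<longleftrightarrow>
     (x \<noteq> y \<and> y = z) \<or>
     (vtype le (x - z) \<and> qstrict le (y - z) (x - z)) \<or>
     (otype le (y - z) \<and> otype le (x - z) \<and> qstrict le 0 (x - y) \<and> qstrict le 0 (x - z))"

definition C_relation :: "('a \<Rightarrow> 'a \<Rightarrow> 'a \<Rightarrow> bool) \<Rightarrow> bool" where
  "C_relation C \<longleftrightarrow>
     (\<forall>x y z. C x y z \<longrightarrow> C x z y) \<and>
     (\<forall>x y z. C x y z \<longrightarrow> \<not> C y x z) \<and>
     (\<forall>x y z w. C x y z \<longrightarrow> C w y z \<or> C x w z) \<and>
     (\<forall>x y. x \<noteq> y \<longrightarrow> C x y y)"

definition C_compatible :: "('a::ab_group_add \<Rightarrow> 'a \<Rightarrow> 'a \<Rightarrow> bool) \<Rightarrow> bool" where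
  "C_compatible C \<longleftrightarrow>
     (\<forall>x y z u v. C x y z \<longrightarrow> C (v + x + u) (v + y + u) (v + z + u))"

datatype gterm = TVar nat | TZero | TPlus gterm gterm | TMinus gterm gterm | TUminus gterm

datatype qf_form = FTrue | FFalse
  | FEq gterm gterm
  | FLe gterm gterm
  | FC gterm gterm gterm
  | FNot qf_form | FAnd qf_form qf_form | FOr qf_form qf_form

primrec teval :: "(nat \<Rightarrow> 'a::ab_group_add) \<Rightarrow> gterm \<Rightarrow> 'a" where
  "teval e (TVar n) = e n"
| "teval e TZero = 0"
| "teval e (TPlus s t) = teval e s + teval e t"
| "teval e (TMinus s t) = teval e s - teval e t"
| "teval e (TUminus s) = - teval e s"

primrec feval :: "('a::ab_group_add \<Rightarrow> 'a \<Rightarrow> bool) \<Rightarrow> ('a \<Rightarrow> 'a \<Rightarrow> 'a \<Rightarrow> bool)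
    \<Rightarrow> (nat \<Rightarrow> 'a) \<Rightarrow> qf_form \<Rightarrow> bool" where
  "feval le C e FTrue = True"
| "feval le C e FFalse = False"
| "feval le C e (FEq s t) = (teval e s = teval e t)"
| "feval le C e (FLe s t) = le (teval e s) (teval e t)"
| "feval le C e (FC r s t) = C (teval e r) (teval e s) (teval e t)"
| "feval le C e (FNot f) = (\<not> feval le C e f)"
| "feval le C e (FAnd f g) = (feval le C e f \<and> feval le C e g)"
| "feval le C e (FOr f g) = (feval le C e f \<or> feval le C e g)"

primrec no_C :: "qf_form \<Rightarrow> bool" where
  "no_C FTrue = True" | "no_C FFalse = True" | "no_C (FEq s t) = True"
| "no_C (FLe s t) = True" | "no_C (FC r s t) = False"
| "no_C (FNot f) = no_C f" | "no_C (FAnd f g) = (no_C f \<and> no_C g)"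
| "no_C (FOr f g) = (no_C f \<and> no_C g)"

primrec no_Le :: "qf_form \<Rightarrow> bool" where
  "no_Le FTrue = True" | "no_Le FFalse = True" | "no_Le (FEq s t) = True"
| "no_Le (FLe s t) = False" | "no_Le (FC r s t) = True"
| "no_Le (FNot f) = no_Le f" | "no_Le (FAnd f g) = (no_Le f \<and> no_Le g)"
| "no_Le (FOr f g) = (no_Le f \<and> no_Le g)"

end

theory Submission
  imports Defs
begin

locale cqo = fixes le :: "'a::ab_group_add \<Rightarrow> 'a \<Rightarrow> bool"
  assumes cq: "compatible_qo le"
begin

abbreviation lt where "lt a b \<equiv> le a b \<and> \<not> le b a"

lemma rf: "le x x" using cq unfolding compatible_qo_def by blast
lemma tr: "le x y \<Longrightarrow> le y z \<Longrightarrow> le x z" using cq unfolding compatible_qo_def by blast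
lemma tot: "le x y \<or> le y x" using cq unfolding compatible_qo_def by blast
lemma q1: "le x 0 \<Longrightarrow> le 0 x \<Longrightarrow> x = 0" using cq unfolding compatible_qo_def qsim_def by blast
lemma q2: "le x y \<Longrightarrow> \<not>(le y z \<and> le z y) \<Longrightarrow> le (x+z) (y+z)"
  using cq unfolding compatible_qo_def qsim_def by blast

definition ot where "ot x \<longleftrightarrow> x = 0 \<or> \<not>(le x (-x) \<and> le (-x) x)"
definition vt where "vt x \<longleftrightarrow> x \<noteq> 0 \<and> le x (-x) \<and> le (-x) x"

lemma vt_ot: "vt x \<longleftrightarrow> \<not> ot x" by (auto simp: vt_def ot_def)

lemma nz: "z \<noteq> 0 \<Longrightarrow> \<not>(le 0 z \<and> le z 0)" using q1 by blast

lemma L1: "le x y \<Longrightarrow> le y x \<Longrightarrow> x \<noteq> y \<Longrightarrow> le x (-x) \<and> le (-x) x"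
proof (rule ccontr)
  assume a: "le x y" "le y x" "x \<noteq> y" and n: "\<not>(le x (-x) \<and> le (-x) x)"
  have "\<not>(le y (-x) \<and> le (-x) y)" using a n tr by blast
  from q2[OF a(1) this] have "le 0 (y - x)" by simp
  moreover from q2[OF a(2) n] have "le (y - x) 0" by simp
  ultimately have "y - x = 0" using q1 by blast
  thus False using a(3) by simp
qed

lemma otype_iff: "otype le g \<longleftrightarrow> ot g"
proof
  assume o: "otype le g"
  show "ot g"
  proof (rule ccontr)
    assume "\<not> ot g"
    hence h: "g \<noteq> 0" "le g (-g)" "le (-g) g" by (auto simp: ot_def)
    hence "-g \<in> {h. qsim le h g}" by (simp add: qsim_def)
    hence "-g = g" using o by (auto simp: otype_def)
    hence "g + g = 0" by (metis neg_eq_iff_add_eq_0)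
    thus False using o h by (auto simp: otype_def order_two_def)
  qed
next
  assume o: "ot g"
  show "otype le g"
  proof (cases "g = 0")
    case True
    have "{h. qsim le h g} = {g}" using True q1 rf by (auto simp: qsim_def)
    thus ?thesis using True by (simp add: otype_def order_two_def)
  next
    case False
    hence n: "\<not>(le g (-g) \<and> le (-g) g)" using o by (simp add: ot_def)
    have "{h. qsim le h g} = {g}" using n L1 rf by (auto simp: qsim_def)
    moreover have "\<not> order_two g"
    proof
      assume "order_two g"
      hence "-g = g" by (metis neg_eq_iff_add_eq_0 order_two_def)
      thus False using n rf by simp
    qed
    ultimately show ?thesis by (simp add: otype_def)
  qed
qed

lemma vtype_iff: "vtype le g \<longleftrightarrow> vt g" by (simp add: vtype_def otype_iff vt_ot)

lemma L2: "vt a \<Longrightarrow> lt 0 a"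
proof -
  assume v: "vt a"
  have a0: "a \<noteq> 0" and s: "le a (-a)" "le (-a) a" using v by (auto simp: vt_def)
  have "\<not> le a 0"
  proof
    assume h: "le a 0"
    have "-a \<noteq> 0" using a0 by simp
    from q2[OF h nz[OF this]] have "le 0 (-a)" by simp
    hence "le 0 a" using s tr by blast
    thus False using h q1 a0 by blast
  qed
  thus ?thesis using tot by blast
qed

lemma L3a: "lt x 0 \<Longrightarrow> lt 0 (-x)"
proof -
  assume h: "lt x 0"
  hence x0: "x \<noteq> 0" by blast
  hence "-x \<noteq> 0" by simp
  from q2[of x 0 "-x", OF _ nz[OF this]] h have "le 0 (-x)" by simp
  moreover have "\<not> le (-x) 0" using q1 \<open>-x \<noteq> 0\<close> \<open>le 0 (-x)\<close> by blast
  ultimately show ?thesis by blast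
qed

lemma L3b: "ot x \<Longrightarrow> lt 0 x \<Longrightarrow> lt (-x) 0"
proof -
  assume o: "ot x" and h: "lt 0 x"
  hence x0: "x \<noteq> 0" by blast
  hence n: "\<not>(le x (-x) \<and> le (-x) x)" using o by (simp add: ot_def)
  from q2[of 0 x "-x", OF _ n] h have "le (-x) 0" by simp
  moreover have "\<not> le 0 (-x)" using q1 x0 \<open>le (-x) 0\<close> neg_equal_0_iff_equal by blast
  ultimately show ?thesis by blast
qed

lemma L4: "ot x \<Longrightarrow> lt 0 x \<Longrightarrow> lt 0 (x+x)"
proof -
  assume o: "ot x" and h: "lt 0 x"
  hence x0: "x \<noteq> 0" by blast
  hence n: "\<not>(le x (-x) \<and> le (-x) x)" using o by (simp add: ot_def)
  have xx: "x + x \<noteq> 0"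
  proof
    assume "x + x = 0" hence "-x = x" by (metis neg_eq_iff_add_eq_0)
    thus False using n rf by simp
  qed
  have "le (-x) 0" using L3b o h by blast
  from q2[OF this nz[OF xx]] have "le x (x+x)" by (simp add: add.assoc[symmetric])
  hence "le 0 (x+x)" using h tr by blast
  moreover have "\<not> le (x+x) 0" using q1 xx \<open>le 0 (x+x)\<close> by blast
  ultimately show ?thesis by blast
qed

lemma ot_neg: "ot (-x) \<longleftrightarrow> ot x" by (auto simp: ot_def)
lemma vt_neg: "vt (-x) \<longleftrightarrow> vt x" by (auto simp: vt_def)

lemma ot_sim: "ot x \<Longrightarrow> le x y \<Longrightarrow> le y x \<Longrightarrow> y = x"
  using L1 q1 by (metis ot_def)

lemma vt_sim: "vt x \<Longrightarrow> le x y \<Longrightarrow> le y x \<Longrightarrow> vt y"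
proof -
  assume v: "vt x" and a: "le x y" "le y x"
  show "vt y"
  proof (cases "y = x")
    case True thus ?thesis using v by simp
  next
    case False
    have "y \<noteq> 0" using v a q1 vt_def tr by (metis)
    thus ?thesis using L1[OF a(2) a(1) False] by (simp add: vt_def)
  qed
qed

lemma L3c: "ot d \<Longrightarrow> lt 0 d \<Longrightarrow> lt 0 (-d) \<Longrightarrow> False"
  using L3b by blast

lemma ltpos_cases: "x \<noteq> 0 \<Longrightarrow> lt 0 x \<or> lt x 0"
  using tot q1 by blast



lemma O2: "ot x \<Longrightarrow> ot (x+x)"
proof -
  have pos: "ot y \<Longrightarrow> lt 0 y \<Longrightarrow> ot (y+y)" for y
  proof -
    assume o: "ot y" and h: "lt 0 y"
    have l: "lt 0 (y+y)" using L4 o h by blast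
    have "lt (-y) 0" using L3b o h by blast
    have y0: "-y \<noteq> 0" using h by auto
    from q2[OF _ nz[OF y0], of "-y"] \<open>lt (-y) 0\<close> have "le (-y + -y) (-y)" by simp
    hence a: "le (-(y+y)) (-y)" by (simp add: algebra_simps)
    show "ot (y+y)"
    proof (rule ccontr)
      assume "\<not> ot (y+y)"
      hence "le (y+y) (-(y+y))" by (simp add: ot_def)
      hence "le (y+y) 0" using a \<open>lt (-y) 0\<close> tr by blast
      thus False using l by blast
    qed
  qed
  assume o: "ot x"
  show "ot (x+x)"
  proof (cases "x = 0")
    case True thus ?thesis by (simp add: ot_def)
  next
    case False
    then consider "lt 0 x" | "lt x 0" using ltpos_cases by blast
    thus ?thesis
    proof cases
      case 1 thus ?thesis using pos o by blast
    next
      case 2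
      hence "lt 0 (-x)" using L3a by blast
      hence "ot (-x + -x)" using pos o ot_neg by blast
      hence "ot (-(x+x))" by (simp add: algebra_simps)
      thus ?thesis using ot_neg by blast
    qed
  qed
qed

lemma M: "ot x \<Longrightarrow> ot y \<Longrightarrow> lt x y \<Longrightarrow> ot (y - x) \<and> lt 0 (y - x)"
proof -
  assume ox: "ot x" and oy: "ot y" and l: "lt x y"
  show ?thesis
  proof (cases "y = -x")
    case True
    have x0: "x \<noteq> 0" using l True by auto
    have "\<not> lt 0 x"
    proof
      assume "lt 0 x" hence "lt (-x) 0" using L3b ox by blast
      thus False using l True \<open>lt 0 x\<close> tr by blast
    qed
    hence "lt x 0" using ltpos_cases x0 by blast
    hence p: "lt 0 (-x)" using L3a by blast
    have o': "ot (-x)" using ox ot_neg by blast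
    have "y - x = -x + -x" using True by simp
    thus ?thesis using L4[OF o' p] O2[OF o'] by simp
  next
    case False
    have n1: "\<not>(le y (-x) \<and> le (-x) y)" using ot_sim[OF oy] False by metis
    from q2[OF _ n1, of x] l have a: "le 0 (y - x)" by simp
    show ?thesis
    proof (cases "y = 0")
      case True
      hence "lt x 0" using l by simp
      thus ?thesis using L3a True ox ot_neg by simp
    next
      case False
      hence n2: "\<not>(le y (-y) \<and> le (-y) y)" using oy by (simp add: ot_def)
      from q2[OF _ n2, of x] l have b: "le (x - y) 0" by simp
      have d0: "y - x \<noteq> 0" using l by auto
      have o: "ot (y - x)"
      proof (rule ccontr)
        assume "\<not> ot (y - x)"
        hence "vt (-(y - x))" using vt_neg vt_ot by blast
        hence "lt 0 (x - y)" using L2 by simp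
        thus False using b by blast
      qed
      moreover have "\<not> le (y - x) 0" using q1 a d0 by blast
      ultimately show ?thesis using a by blast
    qed
  qed
qed

lemma Odiff: "ot x \<Longrightarrow> ot y \<Longrightarrow> ot (y - x)"
proof -
  assume ox: "ot x" and oy: "ot y"
  consider "le x y \<and> le y x" | "lt x y" | "lt y x" using tot by blast
  thus ?thesis
  proof cases
    case 1 hence "y = x" using ot_sim ox by blast
    thus ?thesis by (simp add: ot_def)
  next
    case 2 thus ?thesis using M ox oy by blast
  next
    case 3 hence "ot (x - y)" using M ox oy by blast
    hence "ot (-(y - x))" by simp
    thus ?thesis using ot_neg by blast
  qed
qed

lemma Mrev: "ot x \<Longrightarrow> ot y \<Longrightarrow> lt 0 (y - x) \<Longrightarrow> lt x y"
proof -
  assume ox: "ot x" and oy: "ot y" and p: "lt 0 (y - x)"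
  consider "le x y \<and> le y x" | "lt x y" | "lt y x" using tot by blast
  thus ?thesis
  proof cases
    case 1 hence "y = x" using ot_sim ox by blast
    thus ?thesis using p by simp
  next
    case 2 thus ?thesis .
  next
    case 3 hence "lt 0 (x - y)" using M ox oy by blast
    hence "lt 0 (-(y - x))" by simp
    thus ?thesis using L3c Odiff[OF ox oy] p by blast
  qed
qed

lemma N: "ot p \<Longrightarrow> vt a \<Longrightarrow> vt (p + a)"
proof (rule ccontr)
  assume op: "ot p" and va: "vt a" and n: "\<not> vt (p + a)"
  hence oq: "ot (p + a)" using vt_ot by blast
  have a0: "a \<noteq> 0" using va vt_def by blast
  consider "le p (p+a) \<and> le (p+a) p" | "lt p (p+a)" | "lt (p+a) p" using tot by blast
  thus False
  proof cases
    case 1 hence "p + a = p" using ot_sim op by blast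
    thus False using a0 by simp
  next
    case 2 hence "ot (p + a - p)" using M op oq by blast
    thus False using va vt_ot by simp
  next
    case 3 hence "ot (p - (p + a))" using M op oq by blast
    hence "ot (-a)" by simp
    thus False using va vt_ot ot_neg by blast
  qed
qed

lemma P: "vt a \<Longrightarrow> ot p \<Longrightarrow> lt p a"
proof (cases "p = 0")
  case True
  assume "vt a" thus ?thesis using L2 True by simp
next
  case False
  assume va: "vt a" and op: "ot p"
  hence n: "\<not>(le p (-p) \<and> le (-p) p)" using False by (simp add: ot_def)
  have "\<not> le a p"
  proof
    assume h: "le a p"
    from q2[OF h n] have "le (a - p) 0" by simp
    moreover have "vt (-p + a)" using N op ot_neg va by blast
    hence "lt 0 (a - p)" using L2 by (simp add: algebra_simps)
    ultimately show False by blast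
  qed
  thus ?thesis using tot by blast
qed

lemma L6: "vt a \<Longrightarrow> lt b a \<Longrightarrow> lt (-b) a"
proof -
  assume va: "vt a" and l: "lt b a"
  show ?thesis
  proof (cases "vt b")
    case True
    hence "le (-b) b" "le b (-b)" by (auto simp: vt_def)
    thus ?thesis using l tr by blast
  next
    case False
    hence "ot (-b)" using vt_ot ot_neg by blast
    thus ?thesis using P va by blast
  qed
qed

lemma L5: "vt a \<Longrightarrow> lt b a \<Longrightarrow> le (a+b) a \<and> le a (a+b)"
proof -
  assume va: "vt a" and l: "lt b a"
  have sa: "le a (-a)" "le (-a) a" using va by (auto simp: vt_def)
  have l6: "lt (-b) a" using L6 va l by blast
  have i: "le (a+b) a"
  proof (rule ccontr)
    assume h: "\<not> le (a+b) a"
    hence h': "le a (a+b)" using tot by blast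
    have "vt (a+b)"
    proof (rule ccontr)
      assume "\<not> vt (a+b)" hence "ot (a+b)" using vt_ot by blast
      thus False using P va h by blast
    qed
    hence s: "le (a+b) (-(a+b))" by (simp add: vt_def)
    have n: "\<not>(le (a+b) (-b) \<and> le (-b) (a+b))" using h' l6 tr by blast
    have "le (-a) (a+b)" using sa h' tr by blast
    from q2[OF this n] have "le (-a + -b) a" by simp
    hence "le (-(a+b)) a" by (simp add: algebra_simps)
    thus False using s h tr by blast
  qed
  have ii: "le a (a+b)"
  proof (rule ccontr)
    assume h: "\<not> le a (a+b)"
    have s: "le a (-(a+b)) \<and> le (-(a+b)) a"
    proof (rule ccontr)
      assume n: "\<not>(le a (-(a+b)) \<and> le (-(a+b)) a)"
      from q2[OF _ n, of b] l have "le (b + -(a+b)) (a + -(a+b))" by blast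
      hence "le (-a) (-b)" by (simp add: algebra_simps)
      hence "le a (-b)" using sa tr by blast
      thus False using l6 by blast
    qed
    show False
    proof (cases "-(a+b) = a")
      case True
      hence "a + b = -a" by (metis minus_minus)
      thus False using h sa by simp
    next
      case False
      hence "vt (-(a+b))" using vt_sim va s by blast
      hence "le (-(a+b)) (a+b)" unfolding vt_def minus_minus by blast
      thus False using h s tr by blast
    qed
  qed
  show ?thesis using i ii by blast
qed



lemma ot0[simp]: "ot 0" by (simp add: ot_def)
lemma vt0[simp]: "\<not> vt 0" by (simp add: vt_def)

definition D where "D a b \<longleftrightarrow> (a \<noteq> b \<and> b = 0) \<or> (vt a \<and> lt b a) \<or> (ot b \<and> ot a \<and> lt 0 (a - b) \<and> lt 0 a)"

lemma qstrict_iff: "qstrict le a b \<longleftrightarrow> lt a b" by (auto simp: qstrict_def qsim_def)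

lemma C_D: "induced_C le x y z \<longleftrightarrow> D (x - z) (y - z)"
proof -
  have "(x - z) - (y - z) = x - y" by (simp add: algebra_simps)
  thus ?thesis unfolding induced_C_def D_def otype_iff vtype_iff qstrict_iff by auto
qed

lemma D1: "D a b \<Longrightarrow> D (a - b) (-b)"
proof -
  assume "D a b"
  then consider "a \<noteq> b \<and> b = 0" | "vt a \<and> lt b a" | "ot b \<and> ot a \<and> lt 0 (a - b) \<and> lt 0 a"
    unfolding D_def by blast
  thus ?thesis
  proof cases
    case 1 thus ?thesis by (auto simp: D_def)
  next
    case 2
    hence va: "vt a" and l: "lt b a" by auto
    have l6: "lt (-b) a" using L6 va l by blast
    have s: "le (a + -b) a" "le a (a + -b)" using L5[OF va l6] by auto
    have ab: "a + -b = a - b" by simp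
    have "vt (a - b)" using vt_sim[OF va s(2) s(1)] ab by simp
    moreover have "le (-b) (a - b)" using s(2) l6 tr ab by metis
    moreover have "\<not> le (a - b) (-b)" using s(2) l6 tr ab by metis
    ultimately show ?thesis by (simp add: D_def)
  next
    case 3
    have "ot (-b)" using 3 ot_neg by blast
    moreover have "ot (a - b)" using 3 Odiff by blast
    moreover have "a - b - - b = a" by simp
    ultimately show ?thesis using 3 unfolding D_def by metis
  qed
qed

lemma D2: "D a b \<Longrightarrow> \<not> D b a"
proof -
  assume "D a b"
  then consider "a \<noteq> b \<and> b = 0" | "vt a \<and> lt b a" | "ot b \<and> ot a \<and> lt 0 (a - b) \<and> lt 0 a"
    unfolding D_def by blast
  thus ?thesis
  proof cases
    case 1 thus ?thesis by (auto simp: D_def vt_def)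
  next
    case 2 thus ?thesis by (auto simp: D_def vt_ot)
  next
    case 3
    have "ot (a - b)" using 3 Odiff by blast
    moreover have "b - a = -(a - b)" by simp
    ultimately have "\<not> lt 0 (b - a)" using L3c 3 by metis
    thus ?thesis using 3 by (auto simp: D_def vt_ot)
  qed
qed

lemma D3: "D a b \<Longrightarrow> D c b \<or> D a c"
proof -
  assume "D a b"
  then consider "a \<noteq> b \<and> b = 0" | "vt a \<and> lt b a" | "ot b \<and> ot a \<and> lt 0 (a - b) \<and> lt 0 a"
    unfolding D_def by blast
  thus ?thesis
  proof cases
    case 1 thus ?thesis by (auto simp: D_def)
  next
    case 2
    show ?thesis
    proof (cases "lt c a")
      case True thus ?thesis using 2 by (simp add: D_def)
    next
      case False
      hence "le a c" using tot by blast
      moreover have "vt c" using False P 2 vt_ot by blast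
      ultimately have "vt c \<and> lt b c" using 2 tr by blast
      thus ?thesis by (simp add: D_def)
    qed
  next
    case 3
    have a0: "a \<noteq> 0" using 3 by auto
    show ?thesis
    proof (cases "c = 0")
      case True thus ?thesis using a0 by (simp add: D_def)
    next
      case c0: False
      show ?thesis
      proof (cases "vt c")
        case True thus ?thesis using P 3 by (simp add: D_def)
      next
        case False
        hence oc: "ot c" using vt_ot by blast
        have ba: "lt b a" using Mrev 3 by blast
        show ?thesis
        proof (cases "lt c a")
          case True
          hence "lt 0 (a - c)" using M oc 3 by blast
          thus ?thesis using oc 3 by (simp add: D_def)
        next
          case False
          hence "le a c" using tot by blast
          show ?thesis
          proof (cases "le c a")
            case True
            hence "c = a" using ot_sim 3 \<open>le a c\<close> by blast
            thus ?thesis using \<open>D a b\<close> by simp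
          next
            case False
            hence "lt b c" "lt 0 c" using ba 3 \<open>le a c\<close> tr by blast+
            moreover have "lt 0 (c - b)" using M oc 3 \<open>lt b c\<close> by blast
            ultimately show ?thesis using oc 3 by (simp add: D_def)
          qed
        qed
      qed
    qed
  qed
qed

lemma D4: "a \<noteq> 0 \<Longrightarrow> D a 0" by (simp add: D_def)

lemma C_rel: "C_relation (induced_C le)"
  unfolding C_relation_def
proof (intro conjI allI impI)
  fix x y z assume "induced_C le x y z"
  hence "D (x - z - (y - z)) (-(y - z))" using D1 C_D by blast
  moreover have "x - z - (y - z) = x - y" "-(y - z) = z - y" by (simp_all add: algebra_simps)
  ultimately show "induced_C le x z y" using C_D by simp
next
  fix x y z assume "induced_C le x y z"
  thus "\<not> induced_C le y x z" using D2 C_D by blast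
next
  fix x y z w assume "induced_C le x y z"
  thus "induced_C le w y z \<or> induced_C le x w z" using D3 C_D by blast
next
  fix x y :: 'a assume "x \<noteq> y"
  thus "induced_C le x y y" using D4 C_D by simp
qed

lemma C_comp: "C_compatible (induced_C le)"
  unfolding C_compatible_def
proof (intro allI impI)
  fix x y z u v assume "induced_C le x y z"
  moreover have "v + x + u - (v + z + u) = x - z" "v + y + u - (v + z + u) = y - z"
    by (simp_all add: algebra_simps)
  ultimately show "induced_C le (v + x + u) (v + y + u) (v + z + u)" using C_D by simp
qed

lemma vt_D: "vt t \<longleftrightarrow> t \<noteq> 0 \<and> \<not> D t (-t) \<and> \<not> D (-t) t"
proof
  assume v: "vt t"
  hence s: "t \<noteq> 0" "le t (-t)" "le (-t) t" by (auto simp: vt_def)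
  have n: "\<not> ot t" "\<not> ot (-t)" using v vt_neg vt_ot by blast+
  have "-t \<noteq> 0" using s by simp
  thus "t \<noteq> 0 \<and> \<not> D t (-t) \<and> \<not> D (-t) t" unfolding D_def using s n by auto
next
  assume h: "t \<noteq> 0 \<and> \<not> D t (-t) \<and> \<not> D (-t) t"
  show "vt t"
  proof (rule ccontr)
    assume "\<not> vt t" hence ot: "ot t" using vt_ot by blast
    hence ot': "ot (-t)" using ot_neg by blast
    consider "lt 0 t" | "lt t 0" using ltpos_cases h by blast
    thus False
    proof cases
      case 1 hence "lt 0 (t + t)" using L4 ot by blast
      hence "D t (-t)" using 1 ot ot' by (simp add: D_def)
      thus False using h by blast
    next
      case 2 hence p: "lt 0 (-t)" using L3a by blast
      hence "lt 0 (-t + -t)" using L4 ot' by blast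
      hence "D (-t) t" using p ot ot' by (simp add: D_def)
      thus False using h by blast
    qed
  qed
qed

lemma pos_D: "ot d \<Longrightarrow> lt 0 d \<longleftrightarrow> D d (-d)"
proof
  assume o: "ot d" and p: "lt 0 d"
  hence "lt 0 (d + d)" using L4 by blast
  thus "D d (-d)" using o p ot_neg by (simp add: D_def)
next
  assume o: "ot d" and "D d (-d)"
  thus "lt 0 d" by (auto simp: D_def vt_ot)
qed

lemma le_D: "le x y \<longleftrightarrow> (vt y \<and> (D y x \<or> (vt x \<and> \<not> D x y))) \<or> (ot y \<and> ot x \<and> (x = y \<or> D (y - x) (x - y)))"
proof (cases "vt y")
  case True
  have e1: "D y x \<longleftrightarrow> lt x y" using True L2 by (auto simp: D_def vt_ot)
  have e2: "vt x \<Longrightarrow> D x y \<longleftrightarrow> lt y x" using L2 by (auto simp: D_def vt_ot)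
  have "le x y \<longleftrightarrow> lt x y \<or> (vt x \<and> \<not> lt y x)"
  proof
    assume h: "le x y"
    show "lt x y \<or> (vt x \<and> \<not> lt y x)"
    proof (cases "le y x")
      case True
      hence "vt x" using vt_sim[OF \<open>vt y\<close> True h] by blast
      thus ?thesis using h by blast
    next
      case False thus ?thesis using h by blast
    qed
  next
    assume "lt x y \<or> (vt x \<and> \<not> lt y x)"
    thus "le x y" using tot by blast
  qed
  have "\<not> ot y" using True vt_ot by blast
  have r: "(vt y \<and> (D y x \<or> (vt x \<and> \<not> D x y))) \<or> (ot y \<and> ot x \<and> (x = y \<or> D (y - x) (x - y)))
     \<longleftrightarrow> lt x y \<or> (vt x \<and> \<not> lt y x)"
    by (cases "vt x") (simp_all add: e1 e2 True \<open>\<not> ot y\<close>)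
  show ?thesis unfolding r by fact
next
  case False
  hence oy: "ot y" using vt_ot by blast
  show ?thesis
  proof (cases "vt x")
    case True
    hence "lt y x" using P oy by blast
    thus ?thesis using True oy vt_ot by blast
  next
    case False
    hence ox: "ot x" using vt_ot by blast
    have od: "ot (y - x)" using Odiff ox oy by blast
    have "x - y = -(y - x)" by simp
    hence "D (y - x) (x - y) \<longleftrightarrow> lt x y" using pos_D[OF od] M Mrev ox oy by metis
    moreover have "le x y \<longleftrightarrow> x = y \<or> lt x y" using ot_sim ox rf by blast
    ultimately show ?thesis using ox oy by (auto simp: vt_ot)
  qed
qed

lemma vt_C: "(t \<noteq> 0 \<and> \<not> induced_C le t (-t) 0 \<and> \<not> induced_C le (-t) t 0) \<longleftrightarrow> vt t"
  using vt_D C_D by simp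

lemma le_C: "le x y \<longleftrightarrow>
  ((y \<noteq> 0 \<and> \<not> induced_C le y (-y) 0 \<and> \<not> induced_C le (-y) y 0) \<and>
     (induced_C le y x 0 \<or> ((x \<noteq> 0 \<and> \<not> induced_C le x (-x) 0 \<and> \<not> induced_C le (-x) x 0) \<and> \<not> induced_C le x y 0)))
  \<or> (\<not>(y \<noteq> 0 \<and> \<not> induced_C le y (-y) 0 \<and> \<not> induced_C le (-y) y 0) \<and>
     \<not>(x \<noteq> 0 \<and> \<not> induced_C le x (-x) 0 \<and> \<not> induced_C le (-x) x 0) \<and>
     (x = y \<or> induced_C le (y - x) (x - y) 0))"
  unfolding vt_C unfolding C_D diff_zero using le_D[of x y] by (simp only: vt_ot not_not)

end

theorem mainTheorem18:
  fixes le :: "'a::ab_group_add \<Rightarrow> 'a \<Rightarrow> bool"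
  assumes "compatible_qo le"
  shows "C_relation (induced_C le) \<and> C_compatible (induced_C le)
    \<and> (\<forall>le'. compatible_qo le' \<and> induced_C le' = induced_C le \<longrightarrow> le' = le)
    \<and> (\<exists>\<phi>. no_C \<phi> \<and> (\<forall>le'::'a \<Rightarrow> 'a \<Rightarrow> bool. compatible_qo le' \<longrightarrow>
          (\<forall>e. induced_C le' (e 0) (e 1) (e 2) \<longleftrightarrow> feval le' (induced_C le') e \<phi>)))
    \<and> (\<exists>\<psi>. no_Le \<psi> \<and> (\<forall>le'::'a \<Rightarrow> 'a \<Rightarrow> bool. compatible_qo le' \<longrightarrow>
          (\<forall>e. le' (e 0) (e 1) \<longleftrightarrow> feval le' (induced_C le') e \<psi>)))"
proof -
  have c: "cqo le" using assms by (simp add: cqo_def)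
  have p1: "C_relation (induced_C le)" using cqo.C_rel[OF c] .
  have p2: "C_compatible (induced_C le)" using cqo.C_comp[OF c] .
  have p3: "\<forall>le'. compatible_qo le' \<and> induced_C le' = induced_C le \<longrightarrow> le' = le"
  proof (intro allI impI)
    fix le' :: "'a \<Rightarrow> 'a \<Rightarrow> bool"
    assume h: "compatible_qo le' \<and> induced_C le' = induced_C le"
    hence c': "cqo le'" by (simp add: cqo_def)
    show "le' = le"
    proof (intro ext)
      fix x y
      show "le' x y = le x y" using cqo.le_C[OF c', of x y] cqo.le_C[OF c, of x y] h by simp
    qed
  qed
  define OT where "OT t = FOr (FEq t TZero) (FNot (FAnd (FLe t (TUminus t)) (FLe (TUminus t) t)))" for t
  define ST where "ST s t = FAnd (FLe s t) (FNot (FAnd (FLe s t) (FLe t s)))" for s t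
  define x where "x = TVar 0"
  define y where "y = TVar 1"
  define z where "z = TVar 2"
  define \<phi> where "\<phi> = FOr (FAnd (FNot (FEq x y)) (FEq y z))
     (FOr (FAnd (FNot (OT (TMinus x z))) (ST (TMinus y z) (TMinus x z)))
       (FAnd (OT (TMinus y z)) (FAnd (OT (TMinus x z)) (FAnd (ST TZero (TMinus x y)) (ST TZero (TMinus x z))))))"
  have p4: "no_C \<phi> \<and> (\<forall>le'::'a \<Rightarrow> 'a \<Rightarrow> bool. compatible_qo le' \<longrightarrow>
          (\<forall>e. induced_C le' (e 0) (e 1) (e 2) \<longleftrightarrow> feval le' (induced_C le') e \<phi>))"
  proof (intro conjI allI impI)
    show "no_C \<phi>" by (simp add: \<phi>_def OT_def ST_def)
  next
    fix le' :: "'a \<Rightarrow> 'a \<Rightarrow> bool" and e :: "nat \<Rightarrow> 'a"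
    assume "compatible_qo le'"
    hence c': "cqo le'" by (simp add: cqo_def)
    show "induced_C le' (e 0) (e 1) (e 2) \<longleftrightarrow> feval le' (induced_C le') e \<phi>"
      unfolding induced_C_def vtype_def cqo.otype_iff[OF c'] cqo.ot_def[OF c'] qstrict_def qsim_def
      by (simp add: \<phi>_def OT_def ST_def x_def y_def z_def)
  qed
  define VF where "VF t = FAnd (FNot (FEq t TZero)) (FAnd (FNot (FC t (TUminus t) TZero)) (FNot (FC (TUminus t) t TZero)))" for t
  define \<psi> where "\<psi> = FOr (FAnd (VF y) (FOr (FC y x TZero) (FAnd (VF x) (FNot (FC x y TZero)))))
     (FAnd (FNot (VF y)) (FAnd (FNot (VF x)) (FOr (FEq x y) (FC (TMinus y x) (TMinus x y) TZero))))"
  have p5: "no_Le \<psi> \<and> (\<forall>le'::'a \<Rightarrow> 'a \<Rightarrow> bool. compatible_qo le' \<longrightarrow>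
          (\<forall>e. le' (e 0) (e 1) \<longleftrightarrow> feval le' (induced_C le') e \<psi>))"
  proof (intro conjI allI impI)
    show "no_Le \<psi>" by (simp add: \<psi>_def VF_def)
  next
    fix le' :: "'a \<Rightarrow> 'a \<Rightarrow> bool" and e :: "nat \<Rightarrow> 'a"
    assume "compatible_qo le'"
    hence c': "cqo le'" by (simp add: cqo_def)
    show "le' (e 0) (e 1) \<longleftrightarrow> feval le' (induced_C le') e \<psi>"
      using cqo.le_C[OF c', of "e 0" "e 1"] by (simp add: \<psi>_def VF_def x_def y_def)
  qed
  show ?thesis using p1 p2 p3 p4 p5 by blast
qed

end
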